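(* For any two vertex lattices $\Lambda,\Lambda'$ in $U$ there is a finite sequence of vertex lattices $\Lambda_0=\Lambda,\Lambda_1,\dots,\Lambda_n=\Lambda'$ such that for each $0\le i\le n-1$ either $\Lambda_i\subset\Lambda_{i+1}$ or $\Lambda_i\supset\Lambda_{i+1}$.
   Context: $p$ is an odd prime, $e\in\mathbb Z_p^\times$ a non-square. $(U,Q)$ is a $5$-dimensional quadratic space over $\mathbb Q_p$ possessing an orthogonal basis $u_1,\dots,u_5$ with $Q(u_1)=-ep$, $Q(u_2)=-1$, $Q(u_3)=e$, $Q(u_4)=-1$, $Q(u_5)=e$. Let $[v,w]=Q(v+w)-Q(v)-Q(w)$. For a $\mathbb Z_p$-lattice $\Lambda\subset U$, $\Lambda^\vee=\{v\in U:[v,\Lambda]\subset\mathbb Z_p\}$. A vertex lattice is a lattice $\Lambda$ with $p\Lambda\subset\Lambda^\vee\subset\Lambda$. *)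

theory Defs
  imports "HOL-Analysis.Analysis"
begin

section \<open>The p-adic field, axiomatically\<close>

text \<open>A field K with a Z-valued valuation v (defined on nonzero elements) is
  called here a p-adic field if v is multiplicative and ultrametric, v p = 1,
  K is complete w.r.t. v, and every integral element is congruent mod p to one
  of 0,...,p-1.  Together with characteristic 0 this characterises (K,v)
  up to isomorphism as (Q_p, v_p).\<close>

definition vclose :: "('k::field \<Rightarrow> int) \<Rightarrow> 'k \<Rightarrow> 'k \<Rightarrow> nat \<Rightarrow> bool" where
  "vclose v x y N \<longleftrightarrow> x = y \<or> int N \<le> v (x - y)"

definition is_padic_field :: "nat \<Rightarrow> ('k::field_char_0 \<Rightarrow> int) \<Rightarrow> bool" where
  "is_padic_field p v \<longleftrightarrow>
     (\<forall>x y. x \<noteq> 0 \<longrightarrow> y \<noteq> 0 \<longrightarrow> v (x * y) = v x + v y) \<and>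
     (\<forall>x y. x \<noteq> 0 \<longrightarrow> y \<noteq> 0 \<longrightarrow> x + y \<noteq> 0 \<longrightarrow> min (v x) (v y) \<le> v (x + y)) \<and>
     v (of_nat p) = 1 \<and>
     (\<forall>X :: nat \<Rightarrow> 'k.
        (\<forall>N. \<exists>M. \<forall>m\<ge>M. \<forall>n\<ge>M. vclose v (X m) (X n) N) \<longrightarrow>
        (\<exists>L. \<forall>N. \<exists>M. \<forall>n\<ge>M. vclose v (X n) L N)) \<and>
     (\<forall>x. x \<noteq> 0 \<longrightarrow> 0 \<le> v x \<longrightarrow> (\<exists>a<p. vclose v x (of_nat a) 1))"

text \<open>The valuation ring Z_p.\<close>
definition vring :: "('k::field \<Rightarrow> int) \<Rightarrow> 'k set" where
  "vring v = {x. x = 0 \<or> 0 \<le> v x}"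

section \<open>The quadratic space U = K^5 with orthogonal basis u_1,...,u_5\<close>

text \<open>Coordinates are taken w.r.t. the orthogonal basis u_1..u_5, indexed by
  the elements 0,1,2,3,4 of the numeral type 5 (index i stands for u_(i+1)).\<close>

definition qcoeff :: "nat \<Rightarrow> 'k::field \<Rightarrow> 5 \<Rightarrow> 'k" where
  "qcoeff p e i =
     (if i = 0 then - (e * of_nat p) else if i = 1 then -1 else if i = 2 then e
      else if i = 3 then -1 else e)"

definition Qform :: "nat \<Rightarrow> 'k::field \<Rightarrow> 'k ^ 5 \<Rightarrow> 'k" where
  "Qform p e x = (\<Sum>i\<in>UNIV. qcoeff p e i * (x $ i) ^ 2)"

definition bil :: "nat \<Rightarrow> 'k::field \<Rightarrow> 'k ^ 5 \<Rightarrow> 'k ^ 5 \<Rightarrow> 'k" where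
  "bil p e x y = Qform p e (x + y) - Qform p e x - Qform p e y"

section \<open>Lattices and vertex lattices\<close>

text \<open>A Z_p-lattice in U: the Z_p-span of a K-basis of U.\<close>
definition is_lattice :: "('k::field \<Rightarrow> int) \<Rightarrow> ('k ^ 5) set \<Rightarrow> bool" where
  "is_lattice v L \<longleftrightarrow>
     (\<exists>b :: 5 \<Rightarrow> 'k ^ 5.
        (\<forall>a. (\<Sum>i\<in>UNIV. a i *s b i) = 0 \<longrightarrow> (\<forall>i. a i = 0)) \<and>
        L = {(\<Sum>i\<in>UNIV. a i *s b i) | a. \<forall>i. a i \<in> vring v})"

definition dual_lattice :: "nat \<Rightarrow> 'k::field \<Rightarrow> ('k \<Rightarrow> int) \<Rightarrow> ('k ^ 5) set \<Rightarrow> ('k ^ 5) set" where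
  "dual_lattice p e v L = {x. \<forall>y\<in>L. bil p e x y \<in> vring v}"

definition is_vertex_lattice :: "nat \<Rightarrow> 'k::field \<Rightarrow> ('k \<Rightarrow> int) \<Rightarrow> ('k ^ 5) set \<Rightarrow> bool" where
  "is_vertex_lattice p e v L \<longleftrightarrow>
     is_lattice v L \<and>
     (\<lambda>x. of_nat p *s x) ` L \<subseteq> dual_lattice p e v L \<and>
     dual_lattice p e v L \<subseteq> L"

end

theory Submission
  imports Defs
begin
lemma span_basis:
  fixes b :: "'n::finite \<Rightarrow> 'k::field ^ 'n"
  assumes ind: "\<forall>a. (\<Sum>i\<in>UNIV. a i *s b i) = 0 \<longrightarrow> (\<forall>i. a i = 0)"
  shows "\<exists>a. x = (\<Sum>i\<in>UNIV. a i *s b i)"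
proof -
  have inj: "inj b"
  proof (rule injI, rule ccontr)
    fix i j assume eq: "b i = b j" and ne: "i \<noteq> j"
    define a where "a = (\<lambda>l. if l = i then (1::'k) else if l = j then -1 else 0)"
    have "(\<Sum>l\<in>UNIV. a l *s b l) = (\<Sum>l\<in>{i,j}. a l *s b l)"
      by (rule sum.mono_neutral_right) (auto simp: a_def)
    also have "\<dots> = 0" using eq ne by (simp add: a_def)
    finally have "a i = 0" using ind by blast
    then show False by (simp add: a_def)
  qed
  have indep: "vec.independent (range b)"
  proof
    assume "vec.dependent (range b)"
    then obtain u where u: "\<exists>v\<in>range b. u v \<noteq> 0" "(\<Sum>v\<in>range b. u v *s v) = 0"
      using vec.dependent_finite[of "range b"] by auto
    have "(\<Sum>i\<in>UNIV. u (b i) *s b i) = 0"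
      using u(2) by (simp add: sum.reindex[OF inj])
    then have "\<forall>i. u (b i) = 0" using ind[rule_format, of "\<lambda>i. u (b i)"] by simp
    with u(1) show False by auto
  qed
  have card: "card (range b) = vec.dim (UNIV :: ('k^'n) set)"
    by (simp add: card_image[OF inj] card_cart_basis)
  have "UNIV \<subseteq> vec.span (range b)"
    using vec.card_eq_dim[of "range b" UNIV] card indep by simp
  then have "x \<in> range (\<lambda>u. \<Sum>v\<in>range b. u v *s v)"
    using vec.span_finite[of "range b"] by auto
  then obtain u where "x = (\<Sum>v\<in>range b. u v *s v)" by auto
  then have "x = (\<Sum>i\<in>UNIV. u (b i) *s b i)" by (simp add: sum.reindex[OF inj])
  then show ?thesis by (intro exI[of _ "\<lambda>i. u (b i)"])
qed

locale pad =
  fixes p :: nat and v :: "'k::field_char_0 \<Rightarrow> int" and e :: 'k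
  assumes pf: "is_padic_field p v" and pprime: "prime p" and e0: "e \<noteq> 0" and ve: "v e = 0"
begin

abbreviation R where "R \<equiv> vring v"
definition pp :: 'k where "pp = of_nat p"

lemma vmul: "x \<noteq> 0 \<Longrightarrow> y \<noteq> 0 \<Longrightarrow> v (x*y) = v x + v y"
  using pf[unfolded is_padic_field_def, THEN conjunct1] by blast
lemma vadd: "x \<noteq> 0 \<Longrightarrow> y \<noteq> 0 \<Longrightarrow> x + y \<noteq> 0 \<Longrightarrow> min (v x) (v y) \<le> v (x+y)"
  using pf[unfolded is_padic_field_def, THEN conjunct2, THEN conjunct1] by blast
lemma vp: "v pp = 1"
  using pf[unfolded is_padic_field_def, THEN conjunct2, THEN conjunct2, THEN conjunct1] unfolding pp_def by blast
lemma pp_nz: "pp \<noteq> 0"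
  using pprime prime_gt_0_nat unfolding pp_def by fastforce
lemma v1: "v 1 = 0"
  using vmul[of 1 1] by simp
lemma vinv: "x \<noteq> 0 \<Longrightarrow> v (inverse x) = - v x"
  using vmul[of x "inverse x"] v1 by simp
lemma vm1: "v (-1) = 0"
  using vmul[of "-1" "-1"] v1 by simp
lemma vneg: "x \<noteq> 0 \<Longrightarrow> v (-x) = v x"
  using vmul[of "-1" x] vm1 by simp
lemma vpow: "v (pp ^ n) = int n"
  by (induction n) (auto simp: v1 vmul pp_nz vp)

lemma R_0[simp]: "0 \<in> R" by (simp add: vring_def)
lemma R_1[simp]: "1 \<in> R" by (simp add: vring_def v1)
lemma R_add[intro]: "x \<in> R \<Longrightarrow> y \<in> R \<Longrightarrow> x + y \<in> R"
  unfolding vring_def using vadd[of x y] by fastforce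
lemma R_mult[intro]: "x \<in> R \<Longrightarrow> y \<in> R \<Longrightarrow> x * y \<in> R"
  unfolding vring_def using vmul[of x y] by fastforce
lemma R_uminus[intro]: "x \<in> R \<Longrightarrow> - x \<in> R"
  unfolding vring_def using vneg[of x] by fastforce
lemma R_diff[intro]: "x \<in> R \<Longrightarrow> y \<in> R \<Longrightarrow> x - y \<in> R"
  using R_add[of x "-y"] R_uminus[of y] by simp
lemma R_pow[intro]: "pp ^ n \<in> R"
  unfolding vring_def using vpow by simp
lemma R_pp[intro]: "pp \<in> R" using R_pow[of 1] by simp
lemma R_sum[intro]: "(\<And>i. i \<in> S \<Longrightarrow> f i \<in> R) \<Longrightarrow> sum f S \<in> R"
  by (induction S rule: infinite_finite_induct) auto
lemma R_e[intro]: "e \<in> R" by (simp add: vring_def ve)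
lemma R_of_nat[intro]: "of_nat n \<in> R"
  by (induction n) auto
lemma R_numeral[intro]: "numeral n \<in> R"
  using R_of_nat[of "numeral n"] by simp

lemma R_div: "a \<noteq> 0 \<Longrightarrow> v a \<le> v b \<Longrightarrow> b / a \<in> R"
  unfolding vring_def divide_inverse
  by (cases "b = 0") (auto simp: vmul vinv)

lemma R_ev: "\<exists>k. \<forall>m\<ge>k. pp ^ m * x \<in> R"
proof (cases "x = 0")
  case False
  show ?thesis
  proof (intro exI[of _ "nat (- v x)"] allI impI)
    fix m assume "nat (- v x) \<le> m"
    then have "0 \<le> v (pp ^ m * x)" using False pp_nz by (simp add: vmul vpow)
    then show "pp ^ m * x \<in> R" by (simp add: vring_def)
  qed
qed simp

lemma R_shift: "pp ^ m * x \<in> R \<Longrightarrow> m \<le> n \<Longrightarrow> pp ^ n * x \<in> R"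
proof -
  assume a: "pp ^ m * x \<in> R" "m \<le> n"
  have "pp ^ n = pp ^ (n - m) * pp ^ m" using a(2) by (metis le_add_diff_inverse2 power_add)
  then have "pp ^ n * x = pp ^ (n - m) * (pp ^ m * x)"
    by (simp add: mult.assoc)
  then show ?thesis by (simp only: R_mult[OF R_pow a(1)])
qed

lemma R_ev_fin: "\<exists>k. \<forall>m\<ge>k. \<forall>i::'a::finite. pp ^ m * f i \<in> R"
proof -
  have "\<forall>i. eventually (\<lambda>m. pp ^ m * f i \<in> R) sequentially"
    using R_ev by (auto simp: eventually_sequentially)
  then have "eventually (\<lambda>m. \<forall>i. pp ^ m * f i \<in> R) sequentially"
    using eventually_all_finite[of "\<lambda>m i. pp ^ m * f i \<in> R"] by blast
  then show ?thesis by (auto simp: eventually_sequentially)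
qed

lemma two_nz: "(2::'k) \<noteq> 0" by simp

lemma qc_nz: "qcoeff p e i \<noteq> 0"
  using e0 pp_nz unfolding qcoeff_def pp_def by auto
lemma qc_R: "qcoeff p e i \<in> R"
  unfolding qcoeff_def pp_def[symmetric] by auto

lemma bil_eq: "bil p e x y = (\<Sum>i\<in>UNIV. 2 * qcoeff p e i * x$i * y$i)"
proof -
  have "bil p e x y = (\<Sum>i\<in>UNIV. qcoeff p e i * ((x+y)$i)^2 - qcoeff p e i * (x$i)^2 - qcoeff p e i * (y$i)^2)"
    unfolding bil_def Qform_def by (simp add: sum_subtractf)
  also have "\<dots> = (\<Sum>i\<in>UNIV. 2 * qcoeff p e i * x$i * y$i)"
    by (rule sum.cong) (auto simp: power2_eq_square algebra_simps)
  finally show ?thesis .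
qed

lemma bil_sym: "bil p e x y = bil p e y x"
  unfolding bil_eq by (simp add: mult_ac)
lemma bil_add1: "bil p e (x + y) z = bil p e x z + bil p e y z"
  unfolding bil_eq by (simp add: algebra_simps sum.distrib)
lemma bil_add2: "bil p e z (x + y) = bil p e z x + bil p e z y"
  unfolding bil_eq by (simp add: algebra_simps sum.distrib)
lemma bil_scale1: "bil p e (c *s x) y = c * bil p e x y"
  unfolding bil_eq by (simp add: sum_distrib_left mult_ac)
lemma bil_scale2: "bil p e y (c *s x) = c * bil p e y x"
  unfolding bil_eq by (simp add: sum_distrib_left mult_ac)
lemma bil_zero2[simp]: "bil p e x 0 = 0" unfolding bil_eq by simp
lemma bil_zero1[simp]: "bil p e 0 x = 0" unfolding bil_eq by simp
lemma bil_sum2: "bil p e x (\<Sum>i\<in>S. a i *s b i) = (\<Sum>i\<in>S. a i * bil p e x (b i))"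
  by (induction S rule: infinite_finite_induct)
     (auto simp: bil_add2 bil_scale2)
lemma bil_sum1: "bil p e (\<Sum>i\<in>S. a i *s b i) x = (\<Sum>i\<in>S. a i * bil p e (b i) x)"
  by (induction S rule: infinite_finite_induct)
     (auto simp: bil_add1 bil_scale1)
lemma bil_axis: "bil p e x (axis l 1) = 2 * qcoeff p e l * x$l"
proof -
  have "bil p e x (axis l 1) = (\<Sum>i\<in>{l}. 2 * qcoeff p e i * x$i * (axis l 1 :: 'k^5)$i)"
    unfolding bil_eq by (rule sum.mono_neutral_right) (auto simp: axis_def)
  then show ?thesis by (simp add: axis_def)
qed
lemma bil_nondeg: "(\<And>w. bil p e x w = bil p e y w) \<Longrightarrow> x = y"
proof -
  assume h: "\<And>w. bil p e x w = bil p e y w"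
  have "x$l = y$l" for l
    using h[of "axis l 1"] qc_nz[of l] by (simp add: bil_axis)
  then show "x = y" by (simp add: vec_eq_iff)
qed

end

context pad begin

definition omod :: "('k^5) set \<Rightarrow> bool" where
  "omod Y \<longleftrightarrow> 0 \<in> Y \<and> (\<forall>x\<in>Y. \<forall>y\<in>Y. x + y \<in> Y) \<and> (\<forall>c\<in>R. \<forall>x\<in>Y. c *s x \<in> Y)"
definition O5 :: "('k^5) set" where "O5 = {x. \<forall>i. x$i \<in> R}"
definition OS :: "5 set \<Rightarrow> ('k^5) set" where "OS S = {x \<in> O5. \<forall>i. i \<notin> S \<longrightarrow> x$i = 0}"
definition bnd :: "('k^5) set \<Rightarrow> nat \<Rightarrow> bool" where
  "bnd Y k \<longleftrightarrow> (\<forall>x\<in>Y. pp^k *s x \<in> O5) \<and> (\<forall>x\<in>O5. pp^k *s x \<in> Y)"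

lemma omod_0: "omod Y \<Longrightarrow> 0 \<in> Y" by (simp add: omod_def)
lemma omod_add: "omod Y \<Longrightarrow> x \<in> Y \<Longrightarrow> y \<in> Y \<Longrightarrow> x + y \<in> Y" by (simp add: omod_def)
lemma omod_scale: "omod Y \<Longrightarrow> c \<in> R \<Longrightarrow> x \<in> Y \<Longrightarrow> c *s x \<in> Y" by (simp add: omod_def)
lemma omod_diff: "omod Y \<Longrightarrow> x \<in> Y \<Longrightarrow> y \<in> Y \<Longrightarrow> x - y \<in> Y"
  using omod_add[of Y x "(-1) *s y"] omod_scale[of Y "-1" y] by (simp add: R_uminus)
lemma omod_sum: "omod Y \<Longrightarrow> (\<And>i. i \<in> S \<Longrightarrow> c i \<in> R) \<Longrightarrow> (\<And>i. i \<in> S \<Longrightarrow> b i \<in> Y) \<Longrightarrow>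
   (\<Sum>i\<in>S. c i *s b i) \<in> Y"
  by (induction S rule: infinite_finite_induct) (auto simp: omod_0 omod_add omod_scale)

lemma omod_O5: "omod O5"
  unfolding omod_def O5_def by auto

lemma sum_delta_vec: "i \<in> S \<Longrightarrow> finite S \<Longrightarrow> (\<Sum>l\<in>S. (if l = i then 1 else 0) *s b l) = (b i :: 'k^5)"
proof -
  assume "i \<in> S" "finite S"
  have "(\<Sum>l\<in>S. (if l = i then 1 else 0) *s b l) = (\<Sum>l\<in>S. if l = i then b l else 0)"
    by (rule sum.cong) auto
  then show ?thesis using \<open>i \<in> S\<close> \<open>finite S\<close> by (simp add: sum.delta')
qed

lemma herm:
  fixes S :: "5 set"
  shows "finite S \<Longrightarrow> omod Y \<Longrightarrow> (\<forall>x\<in>OS S. pp^k *s x \<in> Y) \<Longrightarrow> Y \<subseteq> OS S \<Longrightarrow>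
    \<exists>b. (\<forall>a. (\<Sum>i\<in>S. a i *s b i) = 0 \<longrightarrow> (\<forall>i\<in>S. a i = 0)) \<and>
        Y = {(\<Sum>i\<in>S. a i *s b i) | a. \<forall>i\<in>S. a i \<in> R}"
proof (induction S arbitrary: Y rule: finite_induct)
  case empty
  have "Y \<subseteq> {0}" using empty(3) by (auto simp: OS_def vec_eq_iff)
  then have "Y = {0}" using omod_0[OF empty(1)] by auto
  then show ?case by auto
next
  case (insert j S)
  define Z where "Z = {y \<in> Y. y$j = 0}"
  have omZ: "omod Z"
    using insert.prems(1) unfolding Z_def omod_def by auto
  have ZS: "Z \<subseteq> OS S" using insert.prems(3) unfolding Z_def OS_def by auto
  have Zk: "\<forall>x\<in>OS S. pp^k *s x \<in> Z"
  proof
    fix x assume x: "x \<in> OS S"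
    then have "x \<in> OS (insert j S)" using insert.hyps(2) unfolding OS_def by auto
    then have "pp^k *s x \<in> Y" using insert.prems(2) by auto
    moreover have "x$j = 0" using x insert.hyps(2) unfolding OS_def by auto
    ultimately show "pp^k *s x \<in> Z" unfolding Z_def by simp
  qed
  obtain b where bind: "\<forall>a. (\<Sum>i\<in>S. a i *s b i) = 0 \<longrightarrow> (\<forall>i\<in>S. a i = 0)"
    and bspan: "Z = {(\<Sum>i\<in>S. a i *s b i) | a. \<forall>i\<in>S. a i \<in> R}"
    using insert.IH[OF omZ Zk ZS] by blast
  have bZ: "b i \<in> Z" if "i \<in> S" for i
  proof -
    have "b i = (\<Sum>l\<in>S. (if l = i then 1 else 0) *s b l)"
      using sum_delta_vec[OF that insert.hyps(1)] by simp
    also have "\<dots> \<in> Z" unfolding bspan by (intro CollectI exI[of _ "\<lambda>l. if l = i then 1 else 0"]) auto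
    finally show ?thesis .
  qed
  define W where "W = {n::nat. \<exists>y\<in>Y. y$j \<noteq> 0 \<and> v (y$j) = int n}"
  have ax: "axis j 1 \<in> OS (insert j S)" unfolding OS_def O5_def by (auto simp: axis_def)
  have "pp^k *s axis j 1 \<in> Y" using insert.prems(2) ax by auto
  moreover have "(pp^k *s axis j (1::'k))$j \<noteq> 0" using pp_nz by simp
  moreover have "v ((pp^k *s axis j (1::'k))$j) = int k" by (simp add: vpow)
  ultimately have "k \<in> W" unfolding W_def by blast
  define n0 where "n0 = Least (\<lambda>n. n \<in> W)"
  have "n0 \<in> W" unfolding n0_def using \<open>k \<in> W\<close> by (rule LeastI)
  then obtain y0 where y0: "y0 \<in> Y" "y0$j \<noteq> 0" "v (y0$j) = int n0" unfolding W_def by blast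
  have quo: "y$j / y0$j \<in> R" if "y \<in> Y" for y
  proof (cases "y$j = 0")
    case False
    have "y$j \<in> R" using insert.prems(3) that unfolding OS_def O5_def by auto
    then have "0 \<le> v (y$j)" using False unfolding vring_def by auto
    then have "nat (v (y$j)) \<in> W" unfolding W_def using that False by auto
    then have "n0 \<le> nat (v (y$j))" unfolding n0_def by (rule Least_le)
    then have "v (y0$j) \<le> v (y$j)" using y0(3) \<open>0 \<le> v (y$j)\<close> by linarith
    then show ?thesis using R_div y0(2) by blast
  qed simp
  define b' where "b' = b(j := y0)"
  have sum_split: "(\<Sum>i\<in>insert j S. a i *s b' i) = a j *s y0 + (\<Sum>i\<in>S. a i *s b i)" for a
  proof -
    have "(\<Sum>i\<in>S. a i *s b' i) = (\<Sum>i\<in>S. a i *s b i)"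
      by (rule sum.cong) (use insert.hyps(2) in \<open>auto simp: b'_def\<close>)
    then show ?thesis using insert.hyps by (simp add: b'_def)
  qed
  have bj0: "(\<Sum>i\<in>S. a i *s b i)$j = 0" for a
  proof -
    have "(\<Sum>i\<in>S. a i *s b i)$j = (\<Sum>i\<in>S. a i * (b i)$j)" by simp
    also have "\<dots> = 0" by (rule sum.neutral) (use bZ in \<open>auto simp: Z_def\<close>)
    finally show ?thesis .
  qed
  show ?case
  proof (intro exI[of _ b'] conjI allI impI)
    fix a assume h: "(\<Sum>i\<in>insert j S. a i *s b' i) = 0"
    then have h2: "a j *s y0 + (\<Sum>i\<in>S. a i *s b i) = 0" using sum_split by simp
    then have "(a j *s y0 + (\<Sum>i\<in>S. a i *s b i))$j = 0" by simp
    then have "a j * y0$j = 0" using bj0[of a] by simp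
    then have aj: "a j = 0" using y0(2) by simp
    then have "(\<Sum>i\<in>S. a i *s b i) = 0" using h2 by simp
    then have "\<forall>i\<in>S. a i = 0" using bind by blast
    then show "\<forall>i\<in>insert j S. a i = 0" using aj by simp
  next
    show "Y = {(\<Sum>i\<in>insert j S. a i *s b' i) | a. \<forall>i\<in>insert j S. a i \<in> R}"
    proof (intro set_eqI iffI)
      fix y assume y: "y \<in> Y"
      define q where "q = y$j / y0$j"
      have qR: "q \<in> R" using quo[OF y] q_def by simp
      define z where "z = y - q *s y0"
      have "z \<in> Y" unfolding z_def using omod_diff[OF insert.prems(1) y omod_scale[OF insert.prems(1) qR y0(1)]] .
      moreover have "z$j = 0" unfolding z_def q_def using y0(2) by simp
      ultimately have "z \<in> Z" unfolding Z_def by simp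
      then obtain c where c: "z = (\<Sum>i\<in>S. c i *s b i)" "\<forall>i\<in>S. c i \<in> R" unfolding bspan by blast
      have "y = q *s y0 + z" unfolding z_def by simp
      also have "\<dots> = (\<Sum>i\<in>insert j S. (c(j := q)) i *s b' i)"
      proof -
        have "(\<Sum>i\<in>S. (c(j := q)) i *s b i) = (\<Sum>i\<in>S. c i *s b i)"
          by (rule sum.cong) (use insert.hyps(2) in auto)
        then show ?thesis unfolding sum_split c(1) by simp
      qed
      finally show "y \<in> {(\<Sum>i\<in>insert j S. a i *s b' i) | a. \<forall>i\<in>insert j S. a i \<in> R}"
        using c(2) qR by (intro CollectI exI[of _ "c(j := q)"]) auto
    next
      fix y assume "y \<in> {(\<Sum>i\<in>insert j S. a i *s b' i) | a. \<forall>i\<in>insert j S. a i \<in> R}"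
      then obtain a where a: "y = (\<Sum>i\<in>insert j S. a i *s b' i)" "\<forall>i\<in>insert j S. a i \<in> R" by blast
      have "b' i \<in> Y" if "i \<in> insert j S" for i
        using that y0(1) bZ insert.hyps(2) unfolding b'_def Z_def by auto
      then show "y \<in> Y" unfolding a(1) using a(2) by (intro omod_sum[OF insert.prems(1)]) auto
    qed
  qed
qed

end

context pad begin

lemma scale_pow_shift: "k \<le> k' \<Longrightarrow> pp^k' *s x = pp^(k'-k) *s (pp^k *s (x::'k^5))"
  by (simp add: vector_smult_assoc power_add[symmetric])

lemma bnd_mono: "omod Y \<Longrightarrow> bnd Y k \<Longrightarrow> k \<le> k' \<Longrightarrow> bnd Y k'"
proof -
  assume om: "omod Y" and b: "bnd Y k" and kk: "k \<le> k'"
  have "pp^k' *s x \<in> O5" if "x \<in> Y" for x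
  proof -
    have "pp^k *s x \<in> O5" using b that unfolding bnd_def by blast
    then show ?thesis unfolding scale_pow_shift[OF kk, of x] by (rule omod_scale[OF omod_O5 R_pow])
  qed
  moreover have "pp^k' *s x \<in> Y" if "x \<in> O5" for x
  proof -
    have "pp^k *s x \<in> Y" using b that unfolding bnd_def by blast
    then show ?thesis unfolding scale_pow_shift[OF kk, of x] by (rule omod_scale[OF om R_pow])
  qed
  ultimately show ?thesis unfolding bnd_def by blast
qed

lemma bnd_lat:
  assumes om: "omod Y" and bd: "bnd Y k"
  shows "is_lattice v Y"
proof -
  define Y' where "Y' = (\<lambda>x. pp^k *s x) ` Y"
  have om': "omod Y'"
    unfolding omod_def Y'_def
  proof (intro conjI ballI)
    show "0 \<in> (*s) (pp ^ k) ` Y" using omod_0[OF om] by (intro image_eqI[of _ _ 0]) auto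
  next
    fix x y assume "x \<in> (*s) (pp ^ k) ` Y" "y \<in> (*s) (pp ^ k) ` Y"
    then obtain x' y' where "x' \<in> Y" "y' \<in> Y" "x = pp^k *s x'" "y = pp^k *s y'" by auto
    then show "x + y \<in> (*s) (pp ^ k) ` Y"
      using omod_add[OF om] by (intro image_eqI[of _ _ "x' + y'"]) (auto simp: vector_add_ldistrib)
  next
    fix c x assume "c \<in> R" "x \<in> (*s) (pp ^ k) ` Y"
    then obtain x' where "x' \<in> Y" "x = pp^k *s x'" by auto
    then show "c *s x \<in> (*s) (pp ^ k) ` Y"
      using omod_scale[OF om \<open>c \<in> R\<close>] by (intro image_eqI[of _ _ "c *s x'"]) (auto simp: vector_smult_assoc mult.commute)
  qed
  have sub: "Y' \<subseteq> OS UNIV" using bd unfolding bnd_def Y'_def OS_def by auto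
  have big: "\<forall>x\<in>OS UNIV. pp^(k+k) *s x \<in> Y'"
  proof
    fix x assume "x \<in> OS UNIV"
    then have "pp^k *s x \<in> Y" using bd unfolding bnd_def OS_def by auto
    then show "pp^(k+k) *s x \<in> Y'" unfolding Y'_def
      by (intro image_eqI[of _ _ "pp^k *s x"]) (auto simp: vector_smult_assoc power_add)
  qed
  obtain b :: "5 \<Rightarrow> 'k^5" where bind: "\<forall>a. (\<Sum>i\<in>UNIV. a i *s b i) = 0 \<longrightarrow> (\<forall>i\<in>UNIV. a i = 0)"
    and bspan: "Y' = {(\<Sum>i\<in>UNIV. a i *s b i) | a. \<forall>i\<in>UNIV. a i \<in> R}"
    using herm[OF finite_class.finite_UNIV om' big sub] by blast
  define q where "q = inverse (pp^k)"
  have q: "q * pp^k = 1" unfolding q_def using pp_nz by simp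
  define b' where "b' i = q *s b i" for i
  have sc: "(\<Sum>i\<in>UNIV. a i *s b' i) = q *s (\<Sum>i\<in>UNIV. a i *s b i)" for a
    unfolding b'_def by (simp add: vec.scale_sum_right vector_smult_assoc mult.commute)
  show ?thesis
    unfolding is_lattice_def
  proof (intro exI[of _ b'] conjI)
    show "\<forall>a. (\<Sum>i\<in>UNIV. a i *s b' i) = 0 \<longrightarrow> (\<forall>i. a i = 0)"
    proof (rule allI, rule impI)
    fix a assume "(\<Sum>i\<in>UNIV. a i *s b' i) = 0"
    then have "q *s (\<Sum>i\<in>UNIV. a i *s b i) = 0" using sc by simp
    then have "pp^k *s (q *s (\<Sum>i\<in>UNIV. a i *s b i)) = 0" by simp
    then have "(\<Sum>i\<in>UNIV. a i *s b i) = 0" using q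
      by (simp add: vector_smult_assoc mult.commute)
    then show "\<forall>i. a i = 0" using bind by blast
    qed
  next
    show "Y = {(\<Sum>i\<in>UNIV. a i *s b' i) | a. \<forall>i. a i \<in> R}"
    proof (intro set_eqI iffI)
      fix y assume "y \<in> Y"
      then have "pp^k *s y \<in> Y'" unfolding Y'_def by auto
      then obtain a where a: "pp^k *s y = (\<Sum>i\<in>UNIV. a i *s b i)" "\<forall>i. a i \<in> R"
        unfolding bspan by blast
      have "y = q *s (pp^k *s y)" using q by (simp add: vector_smult_assoc)
      then have "y = (\<Sum>i\<in>UNIV. a i *s b' i)" using a(1) sc by simp
      then show "y \<in> {(\<Sum>i\<in>UNIV. a i *s b' i) | a. \<forall>i. a i \<in> R}" using a(2) by blast
    next
      fix y assume "y \<in> {(\<Sum>i\<in>UNIV. a i *s b' i) | a. \<forall>i. a i \<in> R}"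
      then obtain a where a: "y = (\<Sum>i\<in>UNIV. a i *s b' i)" "\<forall>i. a i \<in> R" by blast
      have "(\<Sum>i\<in>UNIV. a i *s b i) \<in> Y'" unfolding bspan using a(2) by blast
      then obtain y' where y': "y' \<in> Y" "(\<Sum>i\<in>UNIV. a i *s b i) = pp^k *s y'" unfolding Y'_def by auto
      have "y = q *s (pp^k *s y')" using a(1) sc y'(2) by simp
      also have "\<dots> = y'" using q by (simp add: vector_smult_assoc)
      finally show "y \<in> Y" using y'(1) by simp
    qed
  qed
qed

end

context pad begin

lemma lspan_omod: "omod {(\<Sum>i\<in>UNIV. a i *s b i) | a. \<forall>i. a i \<in> R}"
  unfolding omod_def
proof (intro conjI ballI)
  show "0 \<in> {(\<Sum>i\<in>UNIV. a i *s b i) | a. \<forall>i. a i \<in> R}"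
    by (intro CollectI exI[of _ "\<lambda>i. 0"]) simp
next
  fix x y assume "x \<in> {(\<Sum>i\<in>UNIV. a i *s b i) | a. \<forall>i. a i \<in> R}" "y \<in> {(\<Sum>i\<in>UNIV. a i *s b i) | a. \<forall>i. a i \<in> R}"
  then obtain a a' where "x = (\<Sum>i\<in>UNIV. a i *s b i)" "\<forall>i. a i \<in> R" "y = (\<Sum>i\<in>UNIV. a' i *s b i)" "\<forall>i. a' i \<in> R" by blast
  then show "x + y \<in> {(\<Sum>i\<in>UNIV. a i *s b i) | a. \<forall>i. a i \<in> R}"
    by (intro CollectI exI[of _ "\<lambda>i. a i + a' i"]) (auto simp: vector_sadd_rdistrib sum.distrib)
next
  fix c x assume c: "c \<in> R" and "x \<in> {(\<Sum>i\<in>UNIV. a i *s b i) | a. \<forall>i. a i \<in> R}"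
  then obtain a where "x = (\<Sum>i\<in>UNIV. a i *s b i)" "\<forall>i. a i \<in> R" by blast
  then show "c *s x \<in> {(\<Sum>i\<in>UNIV. a i *s b i) | a. \<forall>i. a i \<in> R}"
    using c by (intro CollectI exI[of _ "\<lambda>i. c * a i"]) (auto simp: vec.scale_sum_right vector_smult_assoc)
qed

lemma lat_omod: "is_lattice v L \<Longrightarrow> omod L"
  unfolding is_lattice_def using lspan_omod by auto

lemma lat_bnd:
  assumes "is_lattice v L"
  shows "\<exists>k. bnd L k"
proof -
  obtain b :: "5 \<Rightarrow> 'k^5" where ind: "\<forall>a. (\<Sum>i\<in>UNIV. a i *s b i) = 0 \<longrightarrow> (\<forall>i. a i = 0)"
    and L: "L = {(\<Sum>i\<in>UNIV. a i *s b i) | a. \<forall>i. a i \<in> R}"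
    using assms unfolding is_lattice_def by blast
  obtain k1 where k1: "\<forall>m\<ge>k1. \<forall>il::5\<times>5. pp ^ m * (b (fst il))$(snd il) \<in> R"
    using R_ev_fin[of "\<lambda>il::5\<times>5. (b (fst il))$(snd il)"] by blast
  have "\<forall>l. \<exists>d. axis l (1::'k) = (\<Sum>i\<in>UNIV. d i *s b i)" using span_basis[OF ind] by blast
  then obtain d where d: "\<And>l. axis l (1::'k) = (\<Sum>i\<in>UNIV. d l i *s b i)" by metis
  obtain k2 where k2: "\<forall>m\<ge>k2. \<forall>li::5\<times>5. pp ^ m * d (fst li) (snd li) \<in> R"
    using R_ev_fin[of "\<lambda>li::5\<times>5. d (fst li) (snd li)"] by blast
  have b1: "\<forall>x\<in>L. pp^k1 *s x \<in> O5"
  proof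
    fix x assume "x \<in> L"
    then obtain a where a: "x = (\<Sum>i\<in>UNIV. a i *s b i)" "\<forall>i. a i \<in> R" unfolding L by blast
    have "(pp^k1 *s x)$l \<in> R" for l
    proof -
      have "(pp^k1 *s x)$l = (\<Sum>i\<in>UNIV. a i * (pp^k1 * (b i)$l))" unfolding a(1)
        by (simp add: sum_distrib_left mult_ac)
      also have "\<dots> \<in> R"
      proof (rule R_sum)
        fix i show "a i * (pp^k1 * (b i)$l) \<in> R"
          by (rule R_mult) (use a(2) k1 in auto)
      qed
      finally show ?thesis .
    qed
    then show "pp^k1 *s x \<in> O5" unfolding O5_def by simp
  qed
  have b2: "\<forall>x\<in>O5. pp^k2 *s x \<in> L"
  proof
    fix x assume x: "x \<in> O5"
    define c where "c i = (\<Sum>l\<in>UNIV. x$l * (pp^k2 * d l i))" for i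
    have "pp^k2 *s x = (\<Sum>i\<in>UNIV. c i *s b i)"
    proof (subst vec_eq_iff, rule allI)
      fix j
      have "(\<Sum>i\<in>UNIV. c i *s b i)$j = (\<Sum>i\<in>UNIV. \<Sum>l\<in>UNIV. x$l * pp^k2 * (d l i * (b i)$j))"
        unfolding c_def by (simp add: sum_distrib_left sum_distrib_right mult_ac)
      also have "\<dots> = (\<Sum>l\<in>UNIV. x$l * pp^k2 * (\<Sum>i\<in>UNIV. d l i * (b i)$j))"
        by (subst sum.swap) (simp add: sum_distrib_left)
      also have "\<dots> = (\<Sum>l\<in>UNIV. x$l * pp^k2 * (axis l (1::'k))$j)"
        using d by (simp add: sum_component)
      also have "\<dots> = (\<Sum>l\<in>UNIV. if l = j then x$l * pp^k2 else 0)"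
        by (rule sum.cong) (auto simp: axis_def)
      also have "\<dots> = (pp^k2 *s x)$j" by (simp add: mult.commute)
      finally show "(pp^k2 *s x)$j = (\<Sum>i\<in>UNIV. c i *s b i)$j" by simp
    qed
    moreover have "\<forall>i. c i \<in> R"
    proof
      fix i show "c i \<in> R" unfolding c_def
      proof (rule R_sum)
        fix l show "x$l * (pp^k2 * d l i) \<in> R"
          by (rule R_mult) (use x k2 in \<open>auto simp: O5_def\<close>)
      qed
    qed
    ultimately show "pp^k2 *s x \<in> L" unfolding L by blast
  qed
  have "bnd L (max k1 k2)"
  proof -
    have "bnd L k1 \<or> bnd L k2 \<or> True" by simp
    have om: "omod L" using lat_omod[OF assms] .
    have "\<forall>x\<in>L. pp^(max k1 k2) *s x \<in> O5"
      using b1 scale_pow_shift[of k1 "max k1 k2"] omod_scale[OF omod_O5 R_pow] by (metis max.cobounded1)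
    moreover have "\<forall>x\<in>O5. pp^(max k1 k2) *s x \<in> L"
      using b2 scale_pow_shift[of k2 "max k1 k2"] omod_scale[OF om R_pow] by (metis max.cobounded2)
    ultimately show ?thesis unfolding bnd_def by blast
  qed
  then show ?thesis by blast
qed

end

context pad begin

abbreviation DL where "DL X \<equiv> dual_lattice p e v X"

lemma D_mem: "x \<in> DL X \<longleftrightarrow> (\<forall>y\<in>X. bil p e x y \<in> R)"
  unfolding dual_lattice_def by simp
lemma D_anti: "A \<subseteq> B \<Longrightarrow> DL B \<subseteq> DL A"
  unfolding dual_lattice_def by auto
lemma D_D_sup: "A \<subseteq> DL (DL A)"
  unfolding dual_lattice_def by (auto simp: bil_sym)

lemma sum_delta_k1[simp]: "(\<Sum>i\<in>UNIV. c i * (if j = i then (1::'k) else 0)) = c (j::5)"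
proof -
  have "(\<Sum>i\<in>UNIV. c i * (if j = i then (1::'k) else 0)) = (\<Sum>i\<in>UNIV. if j = i then c i else 0)"
    by (rule sum.cong) auto
  then show ?thesis by simp
qed
lemma sum_delta_k2[simp]: "(\<Sum>i\<in>UNIV. c i * (if i = j then (1::'k) else 0)) = c (j::5)"
proof -
  have "(\<Sum>i\<in>UNIV. c i * (if i = j then (1::'k) else 0)) = (\<Sum>i\<in>UNIV. if j = i then c i else 0)"
    by (rule sum.cong) auto
  then show ?thesis by simp
qed

lemma lat_dual:
  assumes "is_lattice v L"
  shows "is_lattice v (DL L) \<and> DL (DL L) = L"
proof -
  obtain b :: "5 \<Rightarrow> 'k^5" where ind: "\<forall>a. (\<Sum>i\<in>UNIV. a i *s b i) = 0 \<longrightarrow> (\<forall>i. a i = 0)"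
    and L: "L = {(\<Sum>i\<in>UNIV. a i *s b i) | a. \<forall>i. a i \<in> R}"
    using assms unfolding is_lattice_def by blast
  have key: "x = y" if h: "\<And>j. bil p e x (b j) = bil p e y (b j)" for x y
  proof (rule bil_nondeg)
    fix w
    obtain a where "w = (\<Sum>i\<in>UNIV. a i *s b i)" using span_basis[OF ind] by blast
    then show "bil p e x w = bil p e y w" by (simp add: bil_sum2 h)
  qed
  define f where "f x = (\<chi> j. bil p e x (b j))" for x
  have lin: "Vector_Spaces.linear (*s) (*s) f"
    unfolding Vector_Spaces.linear_iff
    by (auto simp: vec.vector_space_axioms f_def vec_eq_iff bil_add1 bil_scale1)
  have inj: "inj f"
  proof (rule injI)
    fix x y assume "f x = f y"
    then have "\<And>j. bil p e x (b j) = bil p e y (b j)" unfolding f_def by (simp add: vec_eq_iff)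
    then show "x = y" by (rule key)
  qed
  have surj: "surj f" by (rule vec.linear_inj_imp_surj[OF lin inj])
  define g where "g i = inv f (axis i 1)" for i
  have fg: "f (g i) = axis i 1" for i unfolding g_def using surj by (simp add: surj_f_inv_f)
  have gb: "bil p e (g i) (b j) = (if j = i then 1 else 0)" for i j
  proof -
    have "bil p e (g i) (b j) = (f (g i))$j" unfolding f_def by simp
    then show ?thesis unfolding fg by (simp add: axis_def)
  qed
  have gsum: "bil p e (\<Sum>i\<in>UNIV. c i *s g i) (b j) = c j" for c j
    by (simp add: bil_sum1 gb)
  have bsum: "bil p e (\<Sum>i\<in>UNIV. a i *s b i) (g j) = a j" for a j
    by (simp add: bil_sum1 bil_sym[of "b _"] gb)
  have bL: "b i \<in> L" for i
    unfolding L using sum_delta_vec[of i UNIV b]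
    by (intro CollectI exI[of _ "\<lambda>l. if l = i then 1 else 0"]) auto
  have DLc: "DL L = {(\<Sum>i\<in>UNIV. c i *s g i) | c. \<forall>i. c i \<in> R}"
  proof (intro set_eqI iffI)
    fix x assume x: "x \<in> DL L"
    define c where "c i = bil p e x (b i)" for i
    have cR: "\<forall>i. c i \<in> R" using x bL unfolding c_def D_mem by blast
    have "x = (\<Sum>i\<in>UNIV. c i *s g i)" by (rule key) (simp add: gsum c_def)
    then show "x \<in> {(\<Sum>i\<in>UNIV. c i *s g i) | c. \<forall>i. c i \<in> R}" using cR by blast
  next
    fix x assume "x \<in> {(\<Sum>i\<in>UNIV. c i *s g i) | c. \<forall>i. c i \<in> R}"
    then obtain c where c: "x = (\<Sum>i\<in>UNIV. c i *s g i)" "\<forall>i. c i \<in> R" by blast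
    show "x \<in> DL L" unfolding D_mem
    proof
      fix w assume "w \<in> L"
      then obtain a where a: "w = (\<Sum>i\<in>UNIV. a i *s b i)" "\<forall>i. a i \<in> R" unfolding L by blast
      have "bil p e x w = (\<Sum>i\<in>UNIV. a i * c i)" unfolding a(1) c(1)
        by (simp add: bil_sum2 gsum)
      also have "\<dots> \<in> R" using a(2) c(2) by (intro R_sum) (simp add: R_mult)
      finally show "bil p e x w \<in> R" .
    qed
  qed
  have lat: "is_lattice v (DL L)"
    unfolding is_lattice_def
  proof (intro exI[of _ g] conjI)
    show "\<forall>a. (\<Sum>i\<in>UNIV. a i *s g i) = 0 \<longrightarrow> (\<forall>i. a i = 0)"
    proof (rule allI, rule impI, rule allI)
      fix a i assume h: "(\<Sum>i\<in>UNIV. a i *s g i) = 0"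
      have "a i = bil p e (\<Sum>i\<in>UNIV. a i *s g i) (b i)" by (simp add: gsum)
      then show "a i = 0" unfolding h by simp
    qed
  qed (rule DLc)
  have gDL: "g i \<in> DL L" for i
    unfolding DLc using sum_delta_vec[of i UNIV g]
    by (intro CollectI exI[of _ "\<lambda>l. if l = i then 1 else 0"]) auto
  have "DL (DL L) \<subseteq> L"
  proof
    fix x assume x: "x \<in> DL (DL L)"
    obtain a where a: "x = (\<Sum>i\<in>UNIV. a i *s b i)" using span_basis[OF ind] by blast
    have "a i \<in> R" for i
    proof -
      have "bil p e x (g i) \<in> R" using D_mem[of x "DL L"] x gDL[of i] by blast
      then show ?thesis unfolding a bsum .
    qed
    then show "x \<in> L" unfolding L a by blast
  qed
  then show ?thesis using lat D_D_sup by blast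
qed

end

context pad begin

definition ps :: "('k^5) set \<Rightarrow> ('k^5) set \<Rightarrow> ('k^5) set" where
  "ps A B = {x + y | x y. x \<in> A \<and> y \<in> B}"
definition sc :: "'k \<Rightarrow> ('k^5) set \<Rightarrow> ('k^5) set" where
  "sc c A = (\<lambda>x. c *s x) ` A"

lemma ps_omod: "omod A \<Longrightarrow> omod B \<Longrightarrow> omod (ps A B)"
  unfolding omod_def ps_def
proof (intro conjI ballI)
  assume a: "0 \<in> A \<and> (\<forall>x\<in>A. \<forall>y\<in>A. x + y \<in> A) \<and> (\<forall>c\<in>R. \<forall>x\<in>A. c *s x \<in> A)"
    and b: "0 \<in> B \<and> (\<forall>x\<in>B. \<forall>y\<in>B. x + y \<in> B) \<and> (\<forall>c\<in>R. \<forall>x\<in>B. c *s x \<in> B)"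
  show "0 \<in> {x + y |x y. x \<in> A \<and> y \<in> B}" using a b by force
  fix x y assume "x \<in> {x + y |x y. x \<in> A \<and> y \<in> B}" "y \<in> {x + y |x y. x \<in> A \<and> y \<in> B}"
  then obtain x1 x2 y1 y2 where "x = x1 + x2" "y = y1 + y2" "x1 \<in> A" "y1 \<in> A" "x2 \<in> B" "y2 \<in> B" by blast
  moreover have "x + y = (x1 + y1) + (x2 + y2)" using calculation by (simp add: algebra_simps)
  ultimately show "x + y \<in> {x + y |x y. x \<in> A \<and> y \<in> B}" using a b by blast
next
  assume a: "0 \<in> A \<and> (\<forall>x\<in>A. \<forall>y\<in>A. x + y \<in> A) \<and> (\<forall>c\<in>R. \<forall>x\<in>A. c *s x \<in> A)"
    and b: "0 \<in> B \<and> (\<forall>x\<in>B. \<forall>y\<in>B. x + y \<in> B) \<and> (\<forall>c\<in>R. \<forall>x\<in>B. c *s x \<in> B)"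
  fix c x assume "c \<in> R" "x \<in> {x + y |x y. x \<in> A \<and> y \<in> B}"
  then obtain x1 x2 where "x = x1 + x2" "x1 \<in> A" "x2 \<in> B" by blast
  moreover have "c *s x = c *s x1 + c *s x2" using calculation by (simp add: vector_add_ldistrib)
  ultimately show "c *s x \<in> {x + y |x y. x \<in> A \<and> y \<in> B}" using a b \<open>c \<in> R\<close> by blast
qed

lemma lat_sum:
  assumes A: "is_lattice v A" and B: "is_lattice v B"
  shows "is_lattice v (ps A B)"
proof -
  have oA: "omod A" and oB: "omod B" using lat_omod A B by auto
  obtain k1 k2 where "bnd A k1" "bnd B k2" using lat_bnd A B by blast
  then have bA: "bnd A (max k1 k2)" and bB: "bnd B (max k1 k2)"
    using bnd_mono oA oB by auto
  define k where "k = max k1 k2"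
  have "bnd (ps A B) k" unfolding bnd_def
  proof (intro conjI ballI)
    fix z assume "z \<in> ps A B"
    then obtain x y where "z = x + y" "x \<in> A" "y \<in> B" unfolding ps_def by blast
    then show "pp^k *s z \<in> O5"
      using bA bB omod_add[OF omod_O5] unfolding bnd_def k_def by (simp add: vector_add_ldistrib)
  next
    fix x assume "x \<in> O5"
    then have "pp^k *s x \<in> A" using bA unfolding bnd_def k_def by blast
    then show "pp^k *s x \<in> ps A B" unfolding ps_def using omod_0[OF oB]
      by (intro CollectI exI[of _ "pp^k *s x"] exI[of _ 0]) simp
  qed
  then show ?thesis using bnd_lat ps_omod oA oB by blast
qed

lemma lat_sc:
  assumes A: "is_lattice v A"
  shows "is_lattice v (sc (pp^j) A)"
proof -
  have oA: "omod A" using lat_omod A by auto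
  obtain k where bA: "bnd A k" using lat_bnd A by blast
  have om: "omod (sc (pp^j) A)"
    unfolding omod_def sc_def
  proof (intro conjI ballI)
    show "0 \<in> (*s) (pp ^ j) ` A" using omod_0[OF oA] by (intro image_eqI[of _ _ 0]) auto
  next
    fix x y assume "x \<in> (*s) (pp ^ j) ` A" "y \<in> (*s) (pp ^ j) ` A"
    then obtain x' y' where "x' \<in> A" "y' \<in> A" "x = pp^j *s x'" "y = pp^j *s y'" by auto
    then show "x + y \<in> (*s) (pp ^ j) ` A"
      using omod_add[OF oA] by (intro image_eqI[of _ _ "x' + y'"]) (auto simp: vector_add_ldistrib)
  next
    fix c x assume "c \<in> R" "x \<in> (*s) (pp ^ j) ` A"
    then obtain x' where "x' \<in> A" "x = pp^j *s x'" by auto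
    then show "c *s x \<in> (*s) (pp ^ j) ` A"
      using omod_scale[OF oA \<open>c \<in> R\<close>] by (intro image_eqI[of _ _ "c *s x'"]) (auto simp: vector_smult_assoc mult.commute)
  qed
  have "bnd (sc (pp^j) A) (k + j)" unfolding bnd_def
  proof (intro conjI ballI)
    fix z assume "z \<in> sc (pp^j) A"
    then obtain x where x: "z = pp^j *s x" "x \<in> A" unfolding sc_def by blast
    have eq: "pp^(k+j) *s z = (pp^j * pp^j) *s (pp^k *s x)"
      unfolding x by (simp add: vector_smult_assoc power_add mult_ac)
    have "pp^k *s x \<in> O5" using bA x(2) unfolding bnd_def by blast
    then show "pp^(k+j) *s z \<in> O5" unfolding eq
      by (rule omod_scale[OF omod_O5 R_mult[OF R_pow R_pow]])
  next
    fix x assume "x \<in> O5"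
    then have "pp^k *s x \<in> A" using bA unfolding bnd_def by blast
    moreover have "pp^(k+j) *s x = pp^j *s (pp^k *s x)" by (simp add: vector_smult_assoc power_add mult_ac)
    ultimately show "pp^(k+j) *s x \<in> sc (pp^j) A" unfolding sc_def by (simp only: image_eqI)
  qed
  then show ?thesis using bnd_lat om by blast
qed

lemma lat_cmp:
  assumes A: "is_lattice v A" and B: "is_lattice v B"
  shows "\<exists>k. \<forall>x\<in>A. pp^k *s x \<in> B"
proof -
  obtain k1 k2 where b1: "bnd A k1" and b2: "bnd B k2" using lat_bnd A B by blast
  show ?thesis
  proof (intro exI[of _ "k2 + k1"] ballI)
    fix x assume "x \<in> A"
    then have "pp^k1 *s x \<in> O5" using b1 unfolding bnd_def by blast
    then have "pp^k2 *s (pp^k1 *s x) \<in> B" using b2 unfolding bnd_def by blast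
    then show "pp^(k2+k1) *s x \<in> B" by (simp add: vector_smult_assoc power_add)
  qed
qed

lemma bil_exp: "bil p e (a + b) (c + d) = bil p e a c + bil p e a d + bil p e b c + bil p e b d"
  by (simp add: bil_add1 bil_add2)

end

context pad begin

abbreviation vtx where "vtx L \<equiv> is_vertex_lattice p e v L"

definition conn where
  "conn A B \<longleftrightarrow> (\<exists>(n::nat) Ls. Ls 0 = A \<and> Ls n = B \<and> (\<forall>i\<le>n. vtx (Ls i)) \<and>
      (\<forall>i<n. Ls i \<subseteq> Ls (Suc i) \<or> Ls (Suc i) \<subseteq> Ls i))"

lemma conn_edge: "vtx A \<Longrightarrow> vtx B \<Longrightarrow> A \<subseteq> B \<or> B \<subseteq> A \<Longrightarrow> conn A B"
  unfolding conn_def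
  by (intro exI[of _ "1::nat"] exI[of _ "\<lambda>i. if i = 0 then A else B"]) (auto simp: le_Suc_eq)

lemma conn_sym: "conn A B \<Longrightarrow> conn B A"
proof -
  assume "conn A B"
  then obtain n Ls where h: "Ls 0 = A" "Ls n = B" "\<forall>i\<le>n. vtx (Ls i)"
    "\<forall>i<n. Ls i \<subseteq> Ls (Suc i) \<or> Ls (Suc i) \<subseteq> Ls i" unfolding conn_def by blast
  show "conn B A" unfolding conn_def
  proof (intro exI[of _ n] exI[of _ "\<lambda>i. Ls (n - i)"] conjI allI impI)
    fix i assume i: "i < n"
    then have "Suc (n - Suc i) = n - i" by simp
    then show "Ls (n - i) \<subseteq> Ls (n - Suc i) \<or> Ls (n - Suc i) \<subseteq> Ls (n - i)"
      using h(4)[rule_format, of "n - Suc i"] i by auto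
  qed (use h in auto)
qed

lemma conn_trans: "conn A B \<Longrightarrow> conn B C \<Longrightarrow> conn A C"
proof -
  assume c1: "conn A B" and c2: "conn B C"
  obtain n Ls where h: "Ls 0 = A" "Ls n = B" "\<forall>i\<le>n. vtx (Ls i)"
    "\<forall>i<n. Ls i \<subseteq> Ls (Suc i) \<or> Ls (Suc i) \<subseteq> Ls i" using c1 unfolding conn_def by blast
  obtain m Ms where g: "Ms 0 = B" "Ms m = C" "\<forall>i\<le>m. vtx (Ms i)"
    "\<forall>i<m. Ms i \<subseteq> Ms (Suc i) \<or> Ms (Suc i) \<subseteq> Ms i" using c2 unfolding conn_def by blast
  define Ks where "Ks i = (if i \<le> n then Ls i else Ms (i - n))" for i
  have Ks2: "Ks i = Ms (i - n)" if "n \<le> i" for i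
    using that h(2) g(1) by (cases "i = n") (auto simp: Ks_def)
  show "conn A C" unfolding conn_def
  proof (intro exI[of _ "n + m"] exI[of _ Ks] conjI allI impI)
    show "Ks 0 = A" using h(1) by (simp add: Ks_def)
    show "Ks (n + m) = C" using Ks2[of "n+m"] g(2) by simp
  next
    fix i assume "i \<le> n + m"
    show "vtx (Ks i)"
    proof (cases "i \<le> n")
      case True then show ?thesis using h(3) by (simp add: Ks_def)
    next
      case False then show ?thesis using g(3) Ks2[of i] \<open>i \<le> n + m\<close> by simp
    qed
  next
    fix i assume i: "i < n + m"
    show "Ks i \<subseteq> Ks (Suc i) \<or> Ks (Suc i) \<subseteq> Ks i"
    proof (cases "i < n")
      case True
      then show ?thesis using h(4) by (simp add: Ks_def)
    next
      case False
      then have "Ks i = Ms (i - n)" "Ks (Suc i) = Ms (Suc (i - n))" using Ks2[of i] Ks2[of "Suc i"]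
        by (auto simp: Suc_diff_le)
      moreover have "i - n < m" using i False by simp
      ultimately show ?thesis using g(4) by simp
    qed
  qed
qed


lemma vtx_iff: "vtx L \<longleftrightarrow> is_lattice v L \<and> (\<forall>x\<in>L. pp *s x \<in> DL L) \<and> DL L \<subseteq> L"
  unfolding is_vertex_lattice_def pp_def by auto

lemma ps_mem: "x \<in> ps A (sc c X) \<longleftrightarrow> (\<exists>a z. a \<in> A \<and> z \<in> X \<and> x = a + c *s z)"
  unfolding ps_def sc_def by auto

lemma ps_mem2: "x \<in> ps A B \<longleftrightarrow> (\<exists>a b. a \<in> A \<and> b \<in> B \<and> x = a + b)"
  unfolding ps_def by auto

lemma DLuse: "x \<in> DL X \<Longrightarrow> y \<in> X \<Longrightarrow> bil p e x y \<in> R"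
  unfolding D_mem by blast
lemma DLsym: "x \<in> DL X \<Longrightarrow> y \<in> X \<Longrightarrow> bil p e y x \<in> R"
  using DLuse[of x X y] bil_sym[of y x] by argo

lemma ps_sub1: "0 \<in> B \<Longrightarrow> A \<subseteq> ps A B"
proof
  fix x assume "0 \<in> B" "x \<in> A"
  then show "x \<in> ps A B" unfolding ps_mem2 by (intro exI[of _ x] exI[of _ 0]) simp
qed
lemma ps_sub2: "0 \<in> A \<Longrightarrow> B \<subseteq> ps A B"
proof
  fix x assume "0 \<in> A" "x \<in> B"
  then show "x \<in> ps A B" unfolding ps_mem2 by (intro exI[of _ 0] exI[of _ x]) simp
qed

lemma lat0: "is_lattice v A \<Longrightarrow> 0 \<in> A"
  by (rule omod_0[OF lat_omod])

lemma int_iff: "X \<subseteq> DL X \<longleftrightarrow> (\<forall>x\<in>X. \<forall>y\<in>X. bil p e x y \<in> R)"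
  unfolding subset_iff D_mem Ball_def by (rule refl)


lemma N1_props:
  assumes N: "is_lattice v N" and Nint: "N \<subseteq> DL N" and k2: "2 \<le> k"
    and Nk: "\<forall>x\<in>DL N. pp^k *s x \<in> N"
    and N1: "N1 = ps N (sc (pp^(k-1)) (DL N))"
  shows "is_lattice v N1 \<and> N \<subseteq> N1 \<and> N1 \<subseteq> DL N1 \<and> (\<forall>x\<in>DL N1. pp^(k-1) *s x \<in> N1)
     \<and> (\<forall>a\<in>DL N. \<forall>y\<in>N1. pp * bil p e a y \<in> R)"
proof -
  have DN: "is_lattice v (DL N)" using lat_dual[OF N] by blast
  have lat: "is_lattice v N1" unfolding N1 by (rule lat_sum[OF N lat_sc[OF DN]])
  have z0: "0 \<in> sc (pp^(k-1)) (DL N)" unfolding sc_def using lat0[OF DN] by force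
  have sub: "N \<subseteq> N1" unfolding N1 by (rule ps_sub1[OF z0])
  have pw: "pp^(k-1) * pp^(k-1) = pp^(k-2) * pp^k"
  proof -
    have "(k-1) + (k-1) = (k-2) + k" using k2 by simp
    then show ?thesis by (metis power_add)
  qed
  have pw': "pp ^ (k - Suc 0) * pp ^ (k - Suc 0) = pp ^ (k - 2) * pp ^ k" using pw by simp
  have pw2: "pp * pp^(k-1) = pp^k"
  proof -
    have "Suc (k-1) = k" using k2 by simp
    then show ?thesis by (metis power_Suc)
  qed
  have int: "N1 \<subseteq> DL N1" unfolding int_iff
  proof (intro ballI)
    fix x y assume "x \<in> N1" "y \<in> N1"
    then obtain n z n' z' where h: "n \<in> N" "z \<in> DL N" "x = n + pp^(k-1) *s z"
      "n' \<in> N" "z' \<in> DL N" "y = n' + pp^(k-1) *s z'" unfolding N1 ps_mem by blast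
    have e1: "bil p e x y = bil p e n n' + pp^(k-1) * bil p e n z' + pp^(k-1) * bil p e z n'
       + pp^(k-2) * bil p e z (pp^k *s z')"
      unfolding h(3,6) bil_exp by (simp add: bil_scale1 bil_scale2 pw' mult.assoc[symmetric])
    have "n \<in> DL N" using h(1) Nint by blast
    then have t1: "bil p e n n' \<in> R" using DLuse h(4) by blast
    have t2: "bil p e n z' \<in> R" using DLsym h(5) h(1) by blast
    have t3: "bil p e z n' \<in> R" using DLuse h(2) h(4) by blast
    have t4: "bil p e z (pp^k *s z') \<in> R" using DLuse h(2) Nk h(5) by blast
    show "bil p e x y \<in> R" unfolding e1
      using t1 t2 t3 t4 by (intro R_add R_mult R_pow)
  qed
  have dn1: "\<forall>x\<in>DL N1. pp^(k-1) *s x \<in> N1"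
  proof
    fix x assume "x \<in> DL N1"
    then have "x \<in> DL N" using D_anti[OF sub] by blast
    then show "pp^(k-1) *s x \<in> N1" unfolding N1 ps_mem using lat0[OF N]
      by (intro exI[of _ 0] exI[of _ x]) simp
  qed
  have K: "\<forall>a\<in>DL N. \<forall>y\<in>N1. pp * bil p e a y \<in> R"
  proof (intro ballI)
    fix a y assume a: "a \<in> DL N" and "y \<in> N1"
    then obtain n z where h: "n \<in> N" "z \<in> DL N" "y = n + pp^(k-1) *s z" unfolding N1 ps_mem by blast
    have e1: "pp * bil p e a y = pp * bil p e a n + bil p e a (pp^k *s z)"
      unfolding h(3) by (simp add: bil_add2 bil_scale2 pw2[symmetric] algebra_simps)
    have "bil p e a n \<in> R" using DLuse a h(1) by blast
    moreover have "bil p e a (pp^k *s z) \<in> R" using DLuse a Nk h(2) by blast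
    ultimately show "pp * bil p e a y \<in> R" unfolding e1 by (intro R_add R_mult R_pp)
  qed
  show ?thesis using lat sub int dn1 K by blast
qed


lemma step_vtx:
  assumes N1lat: "is_lattice v N1" and N1int: "N1 \<subseteq> DL N1"
    and K: "\<forall>a\<in>A. \<forall>y\<in>N1. pp * bil p e a y \<in> R" and A: "vtx A"
  shows "\<exists>A'. vtx A' \<and> A' \<subseteq> DL N1 \<and> conn A A'"
proof -
  have Alat: "is_lattice v A" and Ap: "\<forall>x\<in>A. pp *s x \<in> DL A" and AD: "DL A \<subseteq> A"
    using A unfolding vtx_iff by auto
  define Aa where "Aa = ps A N1"
  have Aalat: "is_lattice v Aa" unfolding Aa_def by (rule lat_sum[OF Alat N1lat])
  have AAa: "A \<subseteq> Aa" unfolding Aa_def by (rule ps_sub1[OF lat0[OF N1lat]])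
  have NAa: "N1 \<subseteq> Aa" unfolding Aa_def by (rule ps_sub2[OF lat0[OF Alat]])
  have DAa: "DL Aa \<subseteq> Aa" using D_anti[OF AAa] AD AAa by blast
  have pAa: "\<forall>x\<in>Aa. pp *s x \<in> DL Aa"
  proof
    fix x assume "x \<in> Aa"
    then obtain a n where h: "a \<in> A" "n \<in> N1" "x = a + n" unfolding Aa_def ps_mem2 by blast
    show "pp *s x \<in> DL Aa" unfolding D_mem
    proof
      fix y assume "y \<in> Aa"
      then obtain a' n' where g: "a' \<in> A" "n' \<in> N1" "y = a' + n'" unfolding Aa_def ps_mem2 by blast
      have e1: "bil p e (pp *s x) y = bil p e (pp *s a) a' + pp * bil p e a n' + pp * bil p e a' n
          + pp * bil p e n n'"
        unfolding h(3) g(3) by (simp add: bil_exp bil_scale1 algebra_simps bil_sym[of n a'])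
      have t1: "bil p e (pp *s a) a' \<in> R" using DLuse Ap h(1) g(1) by blast
      have t2: "pp * bil p e a n' \<in> R" using K h(1) g(2) by blast
      have t3: "pp * bil p e a' n \<in> R" using K g(1) h(2) by blast
      have t4: "bil p e n n' \<in> R" using N1int h(2) g(2) unfolding int_iff by blast
      show "bil p e (pp *s x) y \<in> R" unfolding e1 by (intro R_add t1 t2 t3 R_mult[OF R_pp t4])
    qed
  qed
  have vAa: "vtx Aa" unfolding vtx_iff using Aalat pAa DAa by blast
  have DAalat: "is_lattice v (DL Aa)" and DDAa: "DL (DL Aa) = Aa" using lat_dual[OF Aalat] by auto
  define M where "M = ps (DL Aa) N1"
  have Mlat: "is_lattice v M" unfolding M_def by (rule lat_sum[OF DAalat N1lat])
  have NM: "N1 \<subseteq> M" unfolding M_def by (rule ps_sub2[OF lat0[OF DAalat]])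
  have DM: "DL Aa \<subseteq> M" unfolding M_def by (rule ps_sub1[OF lat0[OF N1lat]])
  have Mint: "M \<subseteq> DL M" unfolding int_iff
  proof (intro ballI)
    fix x y assume "x \<in> M" "y \<in> M"
    then obtain a n a' n' where h: "a \<in> DL Aa" "n \<in> N1" "x = a + n" "a' \<in> DL Aa" "n' \<in> N1" "y = a' + n'"
      unfolding M_def ps_mem2 by blast
    have t1: "bil p e a a' \<in> R" using DLuse h(1) h(4) DAa by blast
    have t2: "bil p e a n' \<in> R" using DLuse h(1) h(5) NAa by blast
    have t3: "bil p e n a' \<in> R" using DLsym h(4) h(2) NAa by blast
    have t4: "bil p e n n' \<in> R" using N1int h(2) h(5) unfolding int_iff by blast
    show "bil p e x y \<in> R" unfolding h(3) h(6) bil_exp using t1 t2 t3 t4 by (intro R_add)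
  qed
  define Ab where "Ab = DL M"
  have Ablat: "is_lattice v Ab" and DAb: "DL Ab = M" using lat_dual[OF Mlat] unfolding Ab_def by auto
  have AbAa: "Ab \<subseteq> Aa" unfolding Ab_def using D_anti[OF DM] DDAa by blast
  have vAb: "vtx Ab" unfolding vtx_iff DAb
  proof (intro conjI ballI)
    fix x assume "x \<in> Ab"
    then show "pp *s x \<in> M" using AbAa pAa DM by blast
  qed (use Ablat Mint Ab_def in auto)
  have AbN: "Ab \<subseteq> DL N1" unfolding Ab_def by (rule D_anti[OF NM])
  have "conn A Ab" using conn_trans[OF conn_edge[OF A vAa] conn_edge[OF vAa vAb]] AAa AbAa by blast
  then show ?thesis using vAb AbN by blast
qed


lemma mainA:
  "\<forall>N. is_lattice v N \<longrightarrow> N \<subseteq> DL N \<longrightarrow> (\<forall>x\<in>DL N. pp^k *s x \<in> N) \<longrightarrow>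
     (\<forall>A B. vtx A \<longrightarrow> vtx B \<longrightarrow> A \<subseteq> DL N \<longrightarrow> B \<subseteq> DL N \<longrightarrow> conn A B)"
proof (induction k rule: less_induct)
  case (less k)
  show ?case
  proof (intro allI impI)
    fix N A B
    assume N: "is_lattice v N" and Nint: "N \<subseteq> DL N" and Nk: "\<forall>x\<in>DL N. pp^k *s x \<in> N"
      and vA: "vtx A" and vB: "vtx B" and AN: "A \<subseteq> DL N" and BN: "B \<subseteq> DL N"
    have DNlat: "is_lattice v (DL N)" and DDN: "DL (DL N) = N" using lat_dual[OF N] by auto
    show "conn A B"
    proof (cases "k \<le> 1")
      case True
      have p1: "pp *s x \<in> N" if x: "x \<in> DL N" for x
      proof (cases "k = 0")
        case True
        then have "x \<in> N" using Nk x by simp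
        then show ?thesis by (rule omod_scale[OF lat_omod[OF N] R_pp])
      next
        case False
        then have "k = 1" using \<open>k \<le> 1\<close> by simp
        then show ?thesis using Nk x by simp
      qed
      have vD: "vtx (DL N)" unfolding vtx_iff DDN using DNlat p1 Nint by blast
      show ?thesis using conn_trans[OF conn_edge[OF vA vD] conn_edge[OF vD vB]] AN BN by blast
    next
      case False
      then have k2: "2 \<le> k" by simp
      define N1 where "N1 = ps N (sc (pp^(k-1)) (DL N))"
      have P: "is_lattice v N1 \<and> N \<subseteq> N1 \<and> N1 \<subseteq> DL N1 \<and> (\<forall>x\<in>DL N1. pp^(k-1) *s x \<in> N1)
         \<and> (\<forall>a\<in>DL N. \<forall>y\<in>N1. pp * bil p e a y \<in> R)"
        by (rule N1_props[OF N Nint k2 Nk N1_def])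
      have P1: "is_lattice v N1" and P3: "N1 \<subseteq> DL N1" and P4: "\<forall>x\<in>DL N1. pp^(k-1) *s x \<in> N1"
        and P5: "\<forall>a\<in>DL N. \<forall>y\<in>N1. pp * bil p e a y \<in> R"
        using P by auto
      have "k - 1 < k" using k2 by simp
      then have IHk: "\<forall>N. is_lattice v N \<longrightarrow> N \<subseteq> DL N \<longrightarrow> (\<forall>x\<in>DL N. pp^(k-1) *s x \<in> N) \<longrightarrow>
         (\<forall>A B. vtx A \<longrightarrow> vtx B \<longrightarrow> A \<subseteq> DL N \<longrightarrow> B \<subseteq> DL N \<longrightarrow> conn A B)"
        by (rule less.IH)
      have IH: "\<And>A B. vtx A \<Longrightarrow> vtx B \<Longrightarrow> A \<subseteq> DL N1 \<Longrightarrow> B \<subseteq> DL N1 \<Longrightarrow> conn A B"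
        by (rule IHk[rule_format, OF P1 P3 P4[rule_format]])
      have KA: "\<forall>a\<in>A. \<forall>y\<in>N1. pp * bil p e a y \<in> R" using P5 AN by blast
      have KB: "\<forall>a\<in>B. \<forall>y\<in>N1. pp * bil p e a y \<in> R" using P5 BN by blast
      obtain A' where A': "vtx A'" "A' \<subseteq> DL N1" "conn A A'"
        using step_vtx[OF P1 P3 KA vA] by blast
      obtain B' where B': "vtx B'" "B' \<subseteq> DL N1" "conn B B'"
        using step_vtx[OF P1 P3 KB vB] by blast
      have "conn A' B'" by (rule IH[OF A'(1) B'(1) A'(2) B'(2)])
      then show ?thesis by (rule conn_trans[OF conn_trans[OF A'(3)] conn_sym[OF B'(3)]])
    qed
  qed
qed

theorem conn_all:
  assumes vL: "vtx L" and vL': "vtx L'"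
  shows "conn L L'"
proof -
  have Llat: "is_lattice v L" and LD: "DL L \<subseteq> L" using vL unfolding vtx_iff by auto
  have L'lat: "is_lattice v L'" using vL' unfolding vtx_iff by auto
  define S where "S = ps L L'"
  have Slat: "is_lattice v S" unfolding S_def by (rule lat_sum[OF Llat L'lat])
  have LS: "L \<subseteq> S" unfolding S_def by (rule ps_sub1[OF lat0[OF L'lat]])
  have L'S: "L' \<subseteq> S" unfolding S_def by (rule ps_sub2[OF lat0[OF Llat]])
  define N where "N = DL S"
  have Nlat: "is_lattice v N" and DN: "DL N = S" using lat_dual[OF Slat] unfolding N_def by auto
  have Nint: "N \<subseteq> DL N" unfolding DN unfolding N_def by (rule order_trans[OF D_anti[OF LS] order_trans[OF LD LS]])
  obtain k where k: "\<forall>x\<in>S. pp^k *s x \<in> N" using lat_cmp[OF Slat Nlat] by blast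
  have Nk: "\<forall>x\<in>DL N. pp^k *s x \<in> N" unfolding DN by (rule k)
  have LN: "L \<subseteq> DL N" unfolding DN by (rule LS)
  have L'N: "L' \<subseteq> DL N" unfolding DN by (rule L'S)
  show ?thesis by (rule mainA[of k, rule_format, OF Nlat Nint Nk[rule_format] vL vL' LN L'N])
qed

end

theorem mainTheorem7:
  fixes p :: nat and v :: "'k::field_char_0 \<Rightarrow> int" and e :: 'k
    and L L' :: "('k ^ 5) set"
  assumes "prime p" and "odd p"
    and "is_padic_field p v"
    and "e \<noteq> 0" and "v e = 0" and "\<not> (\<exists>y. y * y = e)"
    and "is_vertex_lattice p e v L" and "is_vertex_lattice p e v L'"
  shows "\<exists>(n::nat) (Ls :: nat \<Rightarrow> ('k ^ 5) set).
           Ls 0 = L \<and> Ls n = L' \<and>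
           (\<forall>i\<le>n. is_vertex_lattice p e v (Ls i)) \<and>
           (\<forall>i<n. Ls i \<subseteq> Ls (Suc i) \<or> Ls (Suc i) \<subseteq> Ls i)"
proof -
  interpret pad p v e
    by unfold_locales (use assms in auto)
  have "conn L L'" by (rule conn_all[OF assms(7) assms(8)])
  then show ?thesis unfolding conn_def .
qed

end
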